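(* Let $\alpha>0$, $\delta>0$, $S\ge0$, $D>0$. Let $N_1,N_2\ge1$ and let $p_{i,k}$ ($i,k\in\{1,\dots,N_1\}$), $q_{j,k}$ ($j,k\in\{1,\dots,N_2\}$), $r_{i,k}$ ($i\in\{1,\dots,N_1\},k\in\{1,\dots,N_2\}$) be continuous real functions of $t\ge0$ with $p_{i,k}=p_{k,i}\ge S$, $q_{j,k}=q_{k,j}\ge S$ and $0\le r_{i,k}\le D$. Let $(x^{(1)},x^{(2)}):[0,\infty)\to\mathbb{R}^{N_1}\times\mathbb{R}^{N_2}$ be a $C^1$ solution of $$\frac{d}{dt}x^{(1)}_i=\alpha\sum_{k=1}^{N_1}p_{k,i}\bigl(x^{(1)}_k-x^{(1)}_i\bigr)-\alpha\sum_{k=1}^{N_2}r_{i,k}\bigl(x^{(2)}_k-x^{(1)}_i\bigr)+\delta x^{(1)}_i\bigl(1-(x^{(1)}_i)^2\bigr),$$ $$\frac{d}{dt}x^{(2)}_j=\alpha\sum_{k=1}^{N_2}q_{k,j}\bigl(x^{(2)}_k-x^{(2)}_j\bigr)-\alpha\sum_{k=1}^{N_1}r_{k,j}\bigl(x^{(1)}_k-x^{(2)}_j\bigr)+\delta x^{(2)}_j\bigl(1-(x^{(2)}_j)^2\bigr).$$ Then $$\frac{d}{dt}M_2=-\frac{\alpha}{N_1}\sum_{i,k=1}^{N_1}p_{k,i}(x^{(1)}_k-x^{(1)}_i)^2-\frac{2\alpha}{N_1}\sum_{k=1}^{N_2}\sum_{i=1}^{N_1}r_{i,k}(x^{(2)}_k-x^{(1)}_i)x^{(1)}_i+\frac{2\delta}{N_1}\sum_{i=1}^{N_1}(x^{(1)}_i)^2\bigl(1-(x^{(1)}_i)^2\bigr)$$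 $$\qquad-\frac{\alpha}{N_2}\sum_{j,k=1}^{N_2}q_{k,j}(x^{(2)}_k-x^{(2)}_j)^2-\frac{2\alpha}{N_2}\sum_{k=1}^{N_1}\sum_{j=1}^{N_2}r_{k,j}(x^{(1)}_k-x^{(2)}_j)x^{(2)}_j+\frac{2\delta}{N_2}\sum_{j=1}^{N_2}(x^{(2)}_j)^2\bigl(1-(x^{(2)}_j)^2\bigr),$$ and there exists a constant $M_2^\infty<\infty$ (depending only on $\alpha,\delta,D,N_1,N_2$ and $M_2(0)$) such that $\sup_{0\le t<\infty}M_2(t)\le M_2^\infty$.
   Context: This is the two-group form of the attractive–repulsive Allen–Cahn system $\frac{d}{dt}x_i=\alpha\sum_{j}(a_{i,j}-\beta_{i,j})(x_j-x_i)+\delta x_i(1-x_i^2)$ on $N=N_1+N_2$ nodes split into groups $\mathcal{I}_1$ (features $x^{(1)}_i$) and $\mathcal{I}_2$ (features $x^{(2)}_j$): within a group the coefficient $a_{i,j}-\beta_{i,j}$ is $p$ or $q$ (attraction, at least $S$), and between groups $a_{i,j}-\beta_{i,j}=-r$ (repulsion, of size at most $D$). Notation: $M_2(V)=\frac1{N_1}\sum_{i=1}^{N_1}(x^{(1)}_i)^2$, $M_2(W)=\frac1{N_2}\sum_{j=1}^{N_2}(x^{(2)}_j)^2$, $M_2=M_2(V)+M_2(W)$. *)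

theory Defs
  imports "HOL-Analysis.Analysis"
begin

definition M2grp :: "nat \<Rightarrow> (nat \<Rightarrow> real) \<Rightarrow> real" where
  "M2grp N v = (1 / real N) * (\<Sum>i=1..N. (v i)^2)"

definition M2tot :: "nat \<Rightarrow> nat \<Rightarrow> (nat \<Rightarrow> real) \<Rightarrow> (nat \<Rightarrow> real) \<Rightarrow> real" where
  "M2tot N1 N2 v w = M2grp N1 v + M2grp N2 w"

definition rhs1 :: "real \<Rightarrow> real \<Rightarrow> nat \<Rightarrow> nat \<Rightarrow>
    (nat \<Rightarrow> nat \<Rightarrow> real \<Rightarrow> real) \<Rightarrow> (nat \<Rightarrow> nat \<Rightarrow> real \<Rightarrow> real) \<Rightarrow>
    (real \<Rightarrow> nat \<Rightarrow> real) \<Rightarrow> (real \<Rightarrow> nat \<Rightarrow> real) \<Rightarrow> real \<Rightarrow> nat \<Rightarrow> real" where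
  "rhs1 \<alpha> \<delta> N1 N2 p r x1 x2 t i =
     \<alpha> * (\<Sum>k=1..N1. p k i t * (x1 t k - x1 t i))
     - \<alpha> * (\<Sum>k=1..N2. r i k t * (x2 t k - x1 t i))
     + \<delta> * x1 t i * (1 - (x1 t i)^2)"

definition rhs2 :: "real \<Rightarrow> real \<Rightarrow> nat \<Rightarrow> nat \<Rightarrow>
    (nat \<Rightarrow> nat \<Rightarrow> real \<Rightarrow> real) \<Rightarrow> (nat \<Rightarrow> nat \<Rightarrow> real \<Rightarrow> real) \<Rightarrow>
    (real \<Rightarrow> nat \<Rightarrow> real) \<Rightarrow> (real \<Rightarrow> nat \<Rightarrow> real) \<Rightarrow> real \<Rightarrow> nat \<Rightarrow> real" where
  "rhs2 \<alpha> \<delta> N1 N2 q r x1 x2 t j =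
     \<alpha> * (\<Sum>k=1..N2. q k j t * (x2 t k - x2 t j))
     - \<alpha> * (\<Sum>k=1..N1. r k j t * (x1 t k - x2 t j))
     + \<delta> * x2 t j * (1 - (x2 t j)^2)"

definition dM2 :: "real \<Rightarrow> real \<Rightarrow> nat \<Rightarrow> nat \<Rightarrow>
    (nat \<Rightarrow> nat \<Rightarrow> real \<Rightarrow> real) \<Rightarrow> (nat \<Rightarrow> nat \<Rightarrow> real \<Rightarrow> real) \<Rightarrow> (nat \<Rightarrow> nat \<Rightarrow> real \<Rightarrow> real) \<Rightarrow>
    (real \<Rightarrow> nat \<Rightarrow> real) \<Rightarrow> (real \<Rightarrow> nat \<Rightarrow> real) \<Rightarrow> real \<Rightarrow> real" where
  "dM2 \<alpha> \<delta> N1 N2 p q r x1 x2 t =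
     - \<alpha> / real N1 * (\<Sum>i=1..N1. \<Sum>k=1..N1. p k i t * (x1 t k - x1 t i)^2)
     - 2 * \<alpha> / real N1 * (\<Sum>k=1..N2. \<Sum>i=1..N1. r i k t * (x2 t k - x1 t i) * x1 t i)
     + 2 * \<delta> / real N1 * (\<Sum>i=1..N1. (x1 t i)^2 * (1 - (x1 t i)^2))
     - \<alpha> / real N2 * (\<Sum>j=1..N2. \<Sum>k=1..N2. q k j t * (x2 t k - x2 t j)^2)
     - 2 * \<alpha> / real N2 * (\<Sum>k=1..N1. \<Sum>j=1..N2. r k j t * (x1 t k - x2 t j) * x2 t j)
     + 2 * \<delta> / real N2 * (\<Sum>j=1..N2. (x2 t j)^2 * (1 - (x2 t j)^2))"

end

theory Submission imports Defs begin

lemma bound_lemma: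
  fixes f g :: "real \<Rightarrow> real"
  assumes der: "\<forall>t\<ge>0. (f has_real_derivative g t) (at t within {0..})"
    and neg: "\<forall>t\<ge>0. f t > R \<longrightarrow> g t < 0"
    and t: "t \<ge> 0"
  shows "f t \<le> max (f 0) R"
proof (rule ccontr)
  define B where "B = max (f 0) R"
  assume "\<not> f t \<le> max (f 0) R"
  hence ft: "f t > B" unfolding B_def by (simp add: not_le)
  have cont: "continuous_on {0..t} f"
  proof (rule continuous_on_subset[of "{0..}"])
    show "continuous_on {0..} f"
      using der by (intro DERIV_continuous_on) auto
  qed auto
  define A where "A = {0..t} \<inter> f -` {..B}"
  have "closed A" unfolding A_def
    by (intro continuous_closed_preimage cont) auto
  hence cA: "compact A" unfolding A_def
    by (metis compact_Icc compact_Int_closed inf.idem inf_assoc)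
  have "0 \<in> A" using t unfolding A_def B_def by auto
  then obtain s where sA: "s \<in> A" and smax: "\<forall>u\<in>A. u \<le> s"
    using compact_attains_sup[OF cA] by blast
  have s0: "0 \<le> s" "s \<le> t" "f s \<le> B" using sA unfolding A_def by auto
  have "s \<noteq> t" using ft s0 by auto
  hence st: "s < t" using s0 by simp
  have "\<exists>x\<in>{s<..<t}. f t - f s = (\<lambda>h. g x * h) (t - s)"
  proof (rule mvt_simple[OF st])
    fix x assume "s \<le> x" "x \<le> t"
    hence "(f has_real_derivative g x) (at x within {0..})" using der s0 by auto
    hence "(f has_real_derivative g x) (at x within {s..t})"
      by (rule has_field_derivative_subset) (use s0 in auto)
    thus "(f has_derivative (\<lambda>h. g x * h)) (at x within {s..t})"
      by (simp add: has_field_derivative_def)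
  qed
  then obtain x where x: "s < x" "x < t" "f t - f s = g x * (t - s)" by auto
  have "x \<notin> A" using smax x by force
  hence "f x > B" using x s0 unfolding A_def by auto
  hence "g x < 0" using neg x s0 unfolding B_def by auto
  hence "g x * (t - s) < 0" using st by (simp add: mult_neg_pos)
  thus False using x ft s0 by linarith
qed


lemma sym_sum:
  fixes P :: "nat \<Rightarrow> nat \<Rightarrow> real" and y :: "nat \<Rightarrow> real"
  assumes "finite I" and sym: "\<And>i k. i \<in> I \<Longrightarrow> k \<in> I \<Longrightarrow> P k i = P i k"
  shows "2 * (\<Sum>i\<in>I. \<Sum>k\<in>I. P k i * (y k - y i) * y i) = - (\<Sum>i\<in>I. \<Sum>k\<in>I. P k i * (y k - y i)^2)"
proof -
  have sq: "(\<Sum>i\<in>I. \<Sum>k\<in>I. P k i * (y k - y i)^2)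
     = (\<Sum>i\<in>I. \<Sum>k\<in>I. P k i * (y k - y i) * y k) - (\<Sum>i\<in>I. \<Sum>k\<in>I. P k i * (y k - y i) * y i)"
    by (simp add: sum_subtractf[symmetric] power2_eq_square algebra_simps)
  have "(\<Sum>i\<in>I. \<Sum>k\<in>I. P k i * (y k - y i) * y k) = (\<Sum>k\<in>I. \<Sum>i\<in>I. P k i * (y k - y i) * y k)"
    by (rule sum.swap)
  also have "\<dots> = (\<Sum>k\<in>I. \<Sum>i\<in>I. - (P i k * (y i - y k) * y k))"
    by (intro sum.cong refl) (simp add: sym algebra_simps)
  also have "\<dots> = - (\<Sum>i\<in>I. \<Sum>k\<in>I. P k i * (y k - y i) * y i)"
    by (simp add: sum_negf)
  finally show ?thesis using sq by simp
qed

lemma aux_alg: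
  fixes \<alpha> \<delta> a b c d e f n1 n2 :: real
  shows "(\<alpha> * (- a) - 2 * \<alpha> * b + 2 * \<delta> * c) / n1 + (\<alpha> * (- d) - 2 * \<alpha> * e + 2 * \<delta> * f) / n2
   = - \<alpha> / n1 * a - 2 * \<alpha> / n1 * b + 2 * \<delta> / n1 * c - \<alpha> / n2 * d - 2 * \<alpha> / n2 * e + 2 * \<delta> / n2 * f"
  by (simp add: diff_divide_distrib add_divide_distrib)

lemma deriv_id:
  assumes N1: "N1 \<ge> 1" and N2: "N2 \<ge> 1"
    and ps: "\<forall>i\<in>{1..N1}. \<forall>k\<in>{1..N1}. p i k t = p k i t"
    and qs: "\<forall>j\<in>{1..N2}. \<forall>k\<in>{1..N2}. q j k t = q k j t"
  shows "(\<Sum>i=1..N1. 2 * x1 t i * rhs1 \<alpha> \<delta> N1 N2 p r x1 x2 t i) / real N1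
       + (\<Sum>j=1..N2. 2 * x2 t j * rhs2 \<alpha> \<delta> N1 N2 q r x1 x2 t j) / real N2
       = dM2 \<alpha> \<delta> N1 N2 p q r x1 x2 t"
proof -
  have e1: "(\<Sum>i=1..N1. 2 * x1 t i * rhs1 \<alpha> \<delta> N1 N2 p r x1 x2 t i)
     = \<alpha> * (2 * (\<Sum>i=1..N1. \<Sum>k=1..N1. p k i t * (x1 t k - x1 t i) * x1 t i))
       - 2 * \<alpha> * (\<Sum>i=1..N1. \<Sum>k=1..N2. r i k t * (x2 t k - x1 t i) * x1 t i)
       + 2 * \<delta> * (\<Sum>i=1..N1. (x1 t i)^2 * (1 - (x1 t i)^2))"
    unfolding rhs1_def
    by (simp add: sum_distrib_left sum_distrib_right sum.distrib sum_subtractf algebra_simps power2_eq_square)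
  have e2: "(\<Sum>j=1..N2. 2 * x2 t j * rhs2 \<alpha> \<delta> N1 N2 q r x1 x2 t j)
     = \<alpha> * (2 * (\<Sum>j=1..N2. \<Sum>k=1..N2. q k j t * (x2 t k - x2 t j) * x2 t j))
       - 2 * \<alpha> * (\<Sum>j=1..N2. \<Sum>k=1..N1. r k j t * (x1 t k - x2 t j) * x2 t j)
       + 2 * \<delta> * (\<Sum>j=1..N2. (x2 t j)^2 * (1 - (x2 t j)^2))"
    unfolding rhs2_def
    by (simp add: sum_distrib_left sum_distrib_right sum.distrib sum_subtractf algebra_simps power2_eq_square)
  have s1: "2 * (\<Sum>i=1..N1. \<Sum>k=1..N1. p k i t * (x1 t k - x1 t i) * x1 t i)
      = - (\<Sum>i=1..N1. \<Sum>k=1..N1. p k i t * (x1 t k - x1 t i)^2)"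
    by (rule sym_sum) (use ps in auto)
  have s2: "2 * (\<Sum>j=1..N2. \<Sum>k=1..N2. q k j t * (x2 t k - x2 t j) * x2 t j)
      = - (\<Sum>j=1..N2. \<Sum>k=1..N2. q k j t * (x2 t k - x2 t j)^2)"
    by (rule sym_sum) (use qs in auto)
  have w1: "(\<Sum>i=1..N1. \<Sum>k=1..N2. r i k t * (x2 t k - x1 t i) * x1 t i)
     = (\<Sum>k=1..N2. \<Sum>i=1..N1. r i k t * (x2 t k - x1 t i) * x1 t i)" by (rule sum.swap)
  have w2: "(\<Sum>j=1..N2. \<Sum>k=1..N1. r k j t * (x1 t k - x2 t j) * x2 t j)
     = (\<Sum>k=1..N1. \<Sum>j=1..N2. r k j t * (x1 t k - x2 t j) * x2 t j)" by (rule sum.swap)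
  show ?thesis unfolding e1 e2 s1 s2 w1 w2 dM2_def
    by (rule aux_alg)
qed


lemma cross_pt:
  fixes r a b D :: real
  assumes "0 \<le> r" "r \<le> D"
  shows "- (r * (b - a) * a) \<le> 2 * D * (a^2 + b^2)"
proof -
  have h: "a^2 - a*b \<le> 2 * (a^2 + b^2)" proof -
    have "0 \<le> (a + b/2)^2" "0 \<le> b^2" by simp_all
    moreover have "(a + b/2)^2 = a^2 + a*b + b^2/4" by (simp add: power2_eq_square algebra_simps)
    ultimately have "0 \<le> a^2 + a*b + 2 * b^2" by linarith
    then show ?thesis by (simp add: algebra_simps)
  qed
  have "- (r * (b - a) * a) = r * (a^2 - a*b)" by (simp add: algebra_simps power2_eq_square)
  also have "\<dots> \<le> r * (2 * (a^2 + b^2))" by (rule mult_left_mono[OF h assms(1)])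
  also have "\<dots> \<le> D * (2 * (a^2 + b^2))" by (rule mult_right_mono[OF assms(2)]) simp
  finally show ?thesis by (simp add: algebra_simps)
qed

lemma quart_pt:
  fixes a L :: real
  shows "a^2 * (1 - a^2) \<le> (1 + L)^2 / 4 - L * a^2"
proof -
  have "0 \<le> (a^2 - (1 + L)/2)^2" by simp
  moreover have "(a^2 - (1 + L)/2)^2 = a^2 * a^2 - (1+L) * a^2 + (1 + L)^2 / 4"
    by (simp add: power2_eq_square algebra_simps)
  moreover have "a^2 * (1 - a^2) = a^2 - a^2 * a^2" by (simp add: algebra_simps)
  ultimately show ?thesis by (simp add: algebra_simps)
qed

lemma cross_sum:
  fixes r :: "nat \<Rightarrow> nat \<Rightarrow> real" and a b :: "nat \<Rightarrow> real"
  assumes "\<forall>i\<in>{1..N1}. \<forall>k\<in>{1..N2}. 0 \<le> r i k \<and> r i k \<le> D"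
  shows "- (\<Sum>k=1..N2. \<Sum>i=1..N1. r i k * (b k - a i) * a i)
     \<le> 2 * D * (real N2 * (\<Sum>i=1..N1. (a i)^2) + real N1 * (\<Sum>k=1..N2. (b k)^2))"
proof -
  have "- (\<Sum>k=1..N2. \<Sum>i=1..N1. r i k * (b k - a i) * a i)
     = (\<Sum>k=1..N2. \<Sum>i=1..N1. - (r i k * (b k - a i) * a i))" by (simp add: sum_negf)
  also have "\<dots> \<le> (\<Sum>k=1..N2. \<Sum>i=1..N1. 2 * D * ((a i)^2 + (b k)^2))"
    by (intro sum_mono cross_pt) (use assms in auto)
  also have "\<dots> = 2 * D * (real N2 * (\<Sum>i=1..N1. (a i)^2) + real N1 * (\<Sum>k=1..N2. (b k)^2))"
    by (simp add: sum_distrib_left sum.distrib sum.swap[of _ "{1..N2}"] algebra_simps)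
  finally show ?thesis .
qed


lemma sq_sum_deriv:
  fixes x :: "real \<Rightarrow> nat \<Rightarrow> real"
  assumes "\<forall>i\<in>{1..N}. ((\<lambda>s. x s i) has_real_derivative f i) (at t within {0..})"
  shows "((\<lambda>s. (\<Sum>i=1..N. (x s i)^2)) has_real_derivative (\<Sum>i=1..N. 2 * x t i * f i)) (at t within {0..})"
proof (rule DERIV_sum)
  fix i assume "i \<in> {1..N}"
  hence h: "((\<lambda>s. x s i) has_real_derivative f i) (at t within {0..})" using assms by auto
  show "((\<lambda>s. (x s i)^2) has_real_derivative 2 * x t i * f i) (at t within {0..})"
    using DERIV_power[OF h, of 2] by (simp add: algebra_simps)
qed

theorem lemma2p1:
  shows "\<exists>Minf :: real \<Rightarrow> real \<Rightarrow> real \<Rightarrow> nat \<Rightarrow> nat \<Rightarrow> real \<Rightarrow> real.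
    \<forall>(\<alpha>::real) (\<delta>::real) (S::real) (D::real) (N1::nat) (N2::nat)
      (p :: nat \<Rightarrow> nat \<Rightarrow> real \<Rightarrow> real) (q :: nat \<Rightarrow> nat \<Rightarrow> real \<Rightarrow> real)
      (r :: nat \<Rightarrow> nat \<Rightarrow> real \<Rightarrow> real)
      (x1 :: real \<Rightarrow> nat \<Rightarrow> real) (x2 :: real \<Rightarrow> nat \<Rightarrow> real).
      \<alpha> > 0 \<and> \<delta> > 0 \<and> S \<ge> 0 \<and> D > 0 \<and> N1 \<ge> 1 \<and> N2 \<ge> 1
      \<and> (\<forall>i\<in>{1..N1}. \<forall>k\<in>{1..N1}. continuous_on {0..} (p i k))
      \<and> (\<forall>j\<in>{1..N2}. \<forall>k\<in>{1..N2}. continuous_on {0..} (q j k))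
      \<and> (\<forall>i\<in>{1..N1}. \<forall>k\<in>{1..N2}. continuous_on {0..} (r i k))
      \<and> (\<forall>t\<ge>0. \<forall>i\<in>{1..N1}. \<forall>k\<in>{1..N1}. p i k t = p k i t \<and> p i k t \<ge> S)
      \<and> (\<forall>t\<ge>0. \<forall>j\<in>{1..N2}. \<forall>k\<in>{1..N2}. q j k t = q k j t \<and> q j k t \<ge> S)
      \<and> (\<forall>t\<ge>0. \<forall>i\<in>{1..N1}. \<forall>k\<in>{1..N2}. 0 \<le> r i k t \<and> r i k t \<le> D)
      \<and> (\<forall>i\<in>{1..N1}. continuous_on {0..} (\<lambda>t. rhs1 \<alpha> \<delta> N1 N2 p r x1 x2 t i))
      \<and> (\<forall>j\<in>{1..N2}. continuous_on {0..} (\<lambda>t. rhs2 \<alpha> \<delta> N1 N2 q r x1 x2 t j))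
      \<and> (\<forall>t\<ge>0. \<forall>i\<in>{1..N1}.
            ((\<lambda>s. x1 s i) has_real_derivative rhs1 \<alpha> \<delta> N1 N2 p r x1 x2 t i) (at t within {0..}))
      \<and> (\<forall>t\<ge>0. \<forall>j\<in>{1..N2}.
            ((\<lambda>s. x2 s j) has_real_derivative rhs2 \<alpha> \<delta> N1 N2 q r x1 x2 t j) (at t within {0..}))
      \<longrightarrow>
        (\<forall>t\<ge>0. ((\<lambda>s. M2tot N1 N2 (x1 s) (x2 s)) has_real_derivative
                    dM2 \<alpha> \<delta> N1 N2 p q r x1 x2 t) (at t within {0..}))
      \<and> (\<forall>t\<ge>0. M2tot N1 N2 (x1 t) (x2 t) \<le> Minf \<alpha> \<delta> D N1 N2 (M2tot N1 N2 (x1 0) (x2 0)))"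
proof (intro exI[of _ "\<lambda>\<alpha> \<delta> D N1 N2 m. max m (2 * ((1 + (4 * \<alpha> * D * (real N1 + real N2) / (2 * \<delta>) + 1))^2 / 4))"] allI impI)
  fix \<alpha> \<delta> S D :: real and N1 N2 :: nat and p q r :: "nat \<Rightarrow> nat \<Rightarrow> real \<Rightarrow> real"
    and x1 x2 :: "real \<Rightarrow> nat \<Rightarrow> real"
  assume H: "\<alpha> > 0 \<and> \<delta> > 0 \<and> S \<ge> 0 \<and> D > 0 \<and> N1 \<ge> 1 \<and> N2 \<ge> 1
      \<and> (\<forall>i\<in>{1..N1}. \<forall>k\<in>{1..N1}. continuous_on {0..} (p i k))
      \<and> (\<forall>j\<in>{1..N2}. \<forall>k\<in>{1..N2}. continuous_on {0..} (q j k))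
      \<and> (\<forall>i\<in>{1..N1}. \<forall>k\<in>{1..N2}. continuous_on {0..} (r i k))
      \<and> (\<forall>t\<ge>0. \<forall>i\<in>{1..N1}. \<forall>k\<in>{1..N1}. p i k t = p k i t \<and> p i k t \<ge> S)
      \<and> (\<forall>t\<ge>0. \<forall>j\<in>{1..N2}. \<forall>k\<in>{1..N2}. q j k t = q k j t \<and> q j k t \<ge> S)
      \<and> (\<forall>t\<ge>0. \<forall>i\<in>{1..N1}. \<forall>k\<in>{1..N2}. 0 \<le> r i k t \<and> r i k t \<le> D)
      \<and> (\<forall>i\<in>{1..N1}. continuous_on {0..} (\<lambda>t. rhs1 \<alpha> \<delta> N1 N2 p r x1 x2 t i))
      \<and> (\<forall>j\<in>{1..N2}. continuous_on {0..} (\<lambda>t. rhs2 \<alpha> \<delta> N1 N2 q r x1 x2 t j))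
      \<and> (\<forall>t\<ge>0. \<forall>i\<in>{1..N1}.
            ((\<lambda>s. x1 s i) has_real_derivative rhs1 \<alpha> \<delta> N1 N2 p r x1 x2 t i) (at t within {0..}))
      \<and> (\<forall>t\<ge>0. \<forall>j\<in>{1..N2}.
            ((\<lambda>s. x2 s j) has_real_derivative rhs2 \<alpha> \<delta> N1 N2 q r x1 x2 t j) (at t within {0..}))"
  note a0 = H[THEN conjunct1]
  note d0 = H[THEN conjunct2, THEN conjunct1]
  note S0 = H[THEN conjunct2, THEN conjunct2, THEN conjunct1]
  note D0 = H[THEN conjunct2, THEN conjunct2, THEN conjunct2, THEN conjunct1]
  note N1 = H[THEN conjunct2, THEN conjunct2, THEN conjunct2, THEN conjunct2, THEN conjunct1]
  note N2 = H[THEN conjunct2, THEN conjunct2, THEN conjunct2, THEN conjunct2, THEN conjunct2, THEN conjunct1]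
  note pS = H[THEN conjunct2, THEN conjunct2, THEN conjunct2, THEN conjunct2, THEN conjunct2, THEN conjunct2, THEN conjunct2, THEN conjunct2, THEN conjunct2, THEN conjunct1]
  note qS = H[THEN conjunct2, THEN conjunct2, THEN conjunct2, THEN conjunct2, THEN conjunct2, THEN conjunct2, THEN conjunct2, THEN conjunct2, THEN conjunct2, THEN conjunct2, THEN conjunct1]
  note rD = H[THEN conjunct2, THEN conjunct2, THEN conjunct2, THEN conjunct2, THEN conjunct2, THEN conjunct2, THEN conjunct2, THEN conjunct2, THEN conjunct2, THEN conjunct2, THEN conjunct2, THEN conjunct1]
  note dx1 = H[THEN conjunct2, THEN conjunct2, THEN conjunct2, THEN conjunct2, THEN conjunct2, THEN conjunct2, THEN conjunct2, THEN conjunct2, THEN conjunct2, THEN conjunct2, THEN conjunct2, THEN conjunct2, THEN conjunct2, THEN conjunct2, THEN conjunct1]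
  note dx2 = H[THEN conjunct2, THEN conjunct2, THEN conjunct2, THEN conjunct2, THEN conjunct2, THEN conjunct2, THEN conjunct2, THEN conjunct2, THEN conjunct2, THEN conjunct2, THEN conjunct2, THEN conjunct2, THEN conjunct2, THEN conjunct2, THEN conjunct2]
  define M where "M = (\<lambda>s. M2tot N1 N2 (x1 s) (x2 s))"
  define g where "g = dM2 \<alpha> \<delta> N1 N2 p q r x1 x2"
  have der: "\<forall>t\<ge>0. (M has_real_derivative g t) (at t within {0..})"
  proof (intro allI impI)
    fix t :: real assume t: "t \<ge> 0"
    have d1: "((\<lambda>s. (\<Sum>i=1..N1. (x1 s i)^2)) has_real_derivative
        (\<Sum>i=1..N1. 2 * x1 t i * rhs1 \<alpha> \<delta> N1 N2 p r x1 x2 t i)) (at t within {0..})"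
      by (rule sq_sum_deriv) (use dx1 t in auto)
    have d2: "((\<lambda>s. (\<Sum>j=1..N2. (x2 s j)^2)) has_real_derivative
        (\<Sum>j=1..N2. 2 * x2 t j * rhs2 \<alpha> \<delta> N1 N2 q r x1 x2 t j)) (at t within {0..})"
      by (rule sq_sum_deriv) (use dx2 t in auto)
    have "(M has_real_derivative
        (1 / real N1) * (\<Sum>i=1..N1. 2 * x1 t i * rhs1 \<alpha> \<delta> N1 N2 p r x1 x2 t i)
      + (1 / real N2) * (\<Sum>j=1..N2. 2 * x2 t j * rhs2 \<alpha> \<delta> N1 N2 q r x1 x2 t j)) (at t within {0..})"
      unfolding M_def M2tot_def M2grp_def
      by (intro DERIV_add DERIV_cmult d1 d2)
    moreover have "(1 / real N1) * (\<Sum>i=1..N1. 2 * x1 t i * rhs1 \<alpha> \<delta> N1 N2 p r x1 x2 t i)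
      + (1 / real N2) * (\<Sum>j=1..N2. 2 * x2 t j * rhs2 \<alpha> \<delta> N1 N2 q r x1 x2 t j) = g t"
      unfolding g_def using deriv_id[OF N1 N2, of p t q x1 \<alpha> \<delta> r x2] pS qS t by auto
    ultimately show "(M has_real_derivative g t) (at t within {0..})" by simp
  qed
  define c where "c = 4 * \<alpha> * D * (real N1 + real N2)"
  define L where "L = c / (2 * \<delta>) + 1"
  define E where "E = (1 + L)^2 / 4"
  have gb: "g t \<le> 4 * \<delta> * E - 2 * \<delta> * M t" if t: "t \<ge> 0" for t
  proof -
    define SA where "SA = (\<Sum>i=1..N1. (x1 t i)^2)"
    define SB where "SB = (\<Sum>j=1..N2. (x2 t j)^2)"
    define u where "u = SA / real N1"
    define v where "v = SB / real N2"
    have n1: "real N1 > 0" and n2: "real N2 > 0" using N1 N2 by auto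
    have Mt: "M t = u + v" unfolding M_def M2tot_def M2grp_def u_def v_def SA_def SB_def by simp
    have X1: "0 \<le> (\<Sum>i=1..N1. \<Sum>k=1..N1. p k i t * (x1 t k - x1 t i)^2)"
    proof -
      have "\<forall>i\<in>{1..N1}. \<forall>k\<in>{1..N1}. 0 \<le> p k i t" using pS t S0 by (meson order_trans)
      thus ?thesis by (intro sum_nonneg mult_nonneg_nonneg) auto
    qed
    have X2: "0 \<le> (\<Sum>j=1..N2. \<Sum>k=1..N2. q k j t * (x2 t k - x2 t j)^2)"
    proof -
      have "\<forall>i\<in>{1..N2}. \<forall>k\<in>{1..N2}. 0 \<le> q k i t" using qS t S0 by (meson order_trans)
      thus ?thesis by (intro sum_nonneg mult_nonneg_nonneg) auto
    qed
    have Y1: "- (\<Sum>k=1..N2. \<Sum>i=1..N1. r i k t * (x2 t k - x1 t i) * x1 t i) \<le> 2 * D * (real N2 * SA + real N1 * SB)"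
      unfolding SA_def SB_def by (rule cross_sum[where r = "\<lambda>i k. r i k t"]) (use rD t in auto)
    have Y2: "- (\<Sum>k=1..N1. \<Sum>j=1..N2. r k j t * (x1 t k - x2 t j) * x2 t j) \<le> 2 * D * (real N1 * SB + real N2 * SA)"
      unfolding SA_def SB_def by (rule cross_sum[where r = "\<lambda>j k. r k j t"]) (use rD t in auto)
    have Z1: "(\<Sum>i=1..N1. (x1 t i)^2 * (1 - (x1 t i)^2)) \<le> real N1 * E - L * SA"
    proof -
      have "(\<Sum>i=1..N1. (x1 t i)^2 * (1 - (x1 t i)^2)) \<le> (\<Sum>i=1..N1. E - L * (x1 t i)^2)"
        unfolding E_def by (intro sum_mono quart_pt)
      also have "\<dots> = real N1 * E - L * SA" unfolding SA_def by (simp add: sum_subtractf sum_distrib_left)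
      finally show ?thesis .
    qed
    have Z2: "(\<Sum>j=1..N2. (x2 t j)^2 * (1 - (x2 t j)^2)) \<le> real N2 * E - L * SB"
    proof -
      have "(\<Sum>j=1..N2. (x2 t j)^2 * (1 - (x2 t j)^2)) \<le> (\<Sum>j=1..N2. E - L * (x2 t j)^2)"
        unfolding E_def by (intro sum_mono quart_pt)
      also have "\<dots> = real N2 * E - L * SB" unfolding SB_def by (simp add: sum_subtractf sum_distrib_left)
      finally show ?thesis .
    qed
    have SAu: "SA = real N1 * u" and SBv: "SB = real N2 * v" using n1 n2 unfolding u_def v_def by auto
    have b1: "- \<alpha> / real N1 * (\<Sum>i=1..N1. \<Sum>k=1..N1. p k i t * (x1 t k - x1 t i)^2) \<le> 0"
      using X1 a0 n1 by (simp add: divide_nonpos_pos mult_nonpos_nonneg)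
    have b4: "- \<alpha> / real N2 * (\<Sum>j=1..N2. \<Sum>k=1..N2. q k j t * (x2 t k - x2 t j)^2) \<le> 0"
      using X2 a0 n2 by (simp add: divide_nonpos_pos mult_nonpos_nonneg)
    have b2: "- 2 * \<alpha> / real N1 * (\<Sum>k=1..N2. \<Sum>i=1..N1. r i k t * (x2 t k - x1 t i) * x1 t i)
        \<le> 4 * \<alpha> * D * (real N2 * (u + v))"
    proof -
      have "- 2 * \<alpha> / real N1 * (\<Sum>k=1..N2. \<Sum>i=1..N1. r i k t * (x2 t k - x1 t i) * x1 t i)
          = 2 * \<alpha> / real N1 * (- (\<Sum>k=1..N2. \<Sum>i=1..N1. r i k t * (x2 t k - x1 t i) * x1 t i))" by simp
      also have "\<dots> \<le> 2 * \<alpha> / real N1 * (2 * D * (real N2 * SA + real N1 * SB))"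
        by (rule mult_left_mono[OF Y1]) (use a0 n1 in simp)
      also have "\<dots> = 4 * \<alpha> * D * (real N2 * (u + v))"
        unfolding SAu SBv using n1 n2 by (simp add: field_simps)
      finally show ?thesis .
    qed
    have b5: "- 2 * \<alpha> / real N2 * (\<Sum>k=1..N1. \<Sum>j=1..N2. r k j t * (x1 t k - x2 t j) * x2 t j)
        \<le> 4 * \<alpha> * D * (real N1 * (u + v))"
    proof -
      have "- 2 * \<alpha> / real N2 * (\<Sum>k=1..N1. \<Sum>j=1..N2. r k j t * (x1 t k - x2 t j) * x2 t j)
          = 2 * \<alpha> / real N2 * (- (\<Sum>k=1..N1. \<Sum>j=1..N2. r k j t * (x1 t k - x2 t j) * x2 t j))" by simp
      also have "\<dots> \<le> 2 * \<alpha> / real N2 * (2 * D * (real N1 * SB + real N2 * SA))"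
        by (rule mult_left_mono[OF Y2]) (use a0 n2 in simp)
      also have "\<dots> = 4 * \<alpha> * D * (real N1 * (u + v))"
        unfolding SAu SBv using n1 n2 by (simp add: field_simps)
      finally show ?thesis .
    qed
    have b3: "2 * \<delta> / real N1 * (\<Sum>i=1..N1. (x1 t i)^2 * (1 - (x1 t i)^2)) \<le> 2 * \<delta> * E - 2 * \<delta> * L * u"
    proof -
      have "2 * \<delta> / real N1 * (\<Sum>i=1..N1. (x1 t i)^2 * (1 - (x1 t i)^2)) \<le> 2 * \<delta> / real N1 * (real N1 * E - L * SA)"
        by (rule mult_left_mono[OF Z1]) (use d0 n1 in simp)
      also have "\<dots> = 2 * \<delta> * E - 2 * \<delta> * L * u" unfolding SAu using n1 by (simp add: field_simps)
      finally show ?thesis .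
    qed
    have b6: "2 * \<delta> / real N2 * (\<Sum>j=1..N2. (x2 t j)^2 * (1 - (x2 t j)^2)) \<le> 2 * \<delta> * E - 2 * \<delta> * L * v"
    proof -
      have "2 * \<delta> / real N2 * (\<Sum>j=1..N2. (x2 t j)^2 * (1 - (x2 t j)^2)) \<le> 2 * \<delta> / real N2 * (real N2 * E - L * SB)"
        by (rule mult_left_mono[OF Z2]) (use d0 n2 in simp)
      also have "\<dots> = 2 * \<delta> * E - 2 * \<delta> * L * v" unfolding SBv using n2 by (simp add: field_simps)
      finally show ?thesis .
    qed
    have key: "4 * \<alpha> * D * (real N2 * (u + v)) + 4 * \<alpha> * D * (real N1 * (u + v))
        + (2 * \<delta> * E - 2 * \<delta> * L * u) + (2 * \<delta> * E - 2 * \<delta> * L * v) = 4 * \<delta> * E - 2 * \<delta> * (u + v)"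
      unfolding L_def c_def using d0 by (simp add: field_simps)
    have "g t \<le> 4 * \<alpha> * D * (real N2 * (u + v)) + 4 * \<alpha> * D * (real N1 * (u + v))
        + (2 * \<delta> * E - 2 * \<delta> * L * u) + (2 * \<delta> * E - 2 * \<delta> * L * v)"
      unfolding g_def dM2_def using b1 b2 b3 b4 b5 b6 by linarith
    hence "g t \<le> 4 * \<delta> * E - 2 * \<delta> * (u + v)" using key by (rule ord_le_eq_trans)
    thus ?thesis unfolding Mt .
  qed
  have neg: "\<forall>t\<ge>0. M t > 2 * E \<longrightarrow> g t < 0"
  proof (intro allI impI)
    fix t :: real assume t: "t \<ge> 0" and m: "M t > 2 * E"
    have "2 * \<delta> * (2 * E) < 2 * \<delta> * M t" using m d0 by simp
    thus "g t < 0" using gb[OF t] by linarith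
  qed
  have "\<forall>t\<ge>0. M t \<le> max (M 0) (2 * E)"
    using bound_lemma[OF der neg] by blast
  moreover have "2 * E = 2 * ((1 + (4 * \<alpha> * D * (real N1 + real N2) / (2 * \<delta>) + 1))^2 / 4)"
    unfolding E_def L_def c_def by simp
  ultimately show "(\<forall>t\<ge>0. ((\<lambda>s. M2tot N1 N2 (x1 s) (x2 s)) has_real_derivative
                    dM2 \<alpha> \<delta> N1 N2 p q r x1 x2 t) (at t within {0..}))
      \<and> (\<forall>t\<ge>0. M2tot N1 N2 (x1 t) (x2 t) \<le> max (M2tot N1 N2 (x1 0) (x2 0)) (2 * ((1 + (4 * \<alpha> * D * (real N1 + real N2) / (2 * \<delta>) + 1))^2 / 4)))"
    using der unfolding M_def g_def by simp
qed

end
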